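(* For all level expressions $l_1, l_2, l$ and every natural number $n > 0$: $l_1 \sqcup l \simeq l_2 \sqcup \mathtt{s}^n\,l$ if and only if $l_1 \simeq l_2 \sqcup \mathtt{s}^n\,l$.
   Context: Level expressions are generated by the grammar $l ::= i \mid \mathtt{z} \mid \mathtt{s}\,l \mid l \sqcup l'$, where $i$ ranges over an infinite set $\mathcal{I}$ of level variables. The relation $\simeq$ is the smallest congruence on level expressions (closed under the constructors and under substitution of level expressions for level variables) containing the equations $i_1 \sqcup (i_2 \sqcup i_3) \approx (i_1 \sqcup i_2) \sqcup i_3$, $i_1 \sqcup i_2 \approx i_2 \sqcup i_1$, $\mathtt{s}\,(i_1 \sqcup i_2) \approx \mathtt{s}\,i_1 \sqcup \mathtt{s}\,i_2$, $i \sqcup \mathtt{s}\,i \approx \mathtt{s}\,i$, $i \sqcup \mathtt{z} \approx i$, $i \sqcup i \approx i$. $\mathtt{s}^0\,l = l$, $\mathtt{s}^{n+1}\,l = \mathtt{s}(\mathtt{s}^n\,l)$. *)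

theory Defs
  imports Main
begin

datatype 'v lvl = LVar 'v | LZ | LS "'v lvl" | LMax "'v lvl" "'v lvl"

primrec lsubst :: "('v \<Rightarrow> 'v lvl) \<Rightarrow> 'v lvl \<Rightarrow> 'v lvl" where
  "lsubst \<sigma> (LVar i) = \<sigma> i"
| "lsubst \<sigma> LZ = LZ"
| "lsubst \<sigma> (LS l) = LS (lsubst \<sigma> l)"
| "lsubst \<sigma> (LMax l l') = LMax (lsubst \<sigma> l) (lsubst \<sigma> l')"

primrec spow :: "nat \<Rightarrow> 'v lvl \<Rightarrow> 'v lvl" where
  "spow 0 l = l"
| "spow (Suc n) l = LS (spow n l)"

inductive leq :: "'v lvl \<Rightarrow> 'v lvl \<Rightarrow> bool" where
  assoc: "leq (LMax (LVar i1) (LMax (LVar i2) (LVar i3))) (LMax (LMax (LVar i1) (LVar i2)) (LVar i3))"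
| comm: "leq (LMax (LVar i1) (LVar i2)) (LMax (LVar i2) (LVar i1))"
| sdist: "leq (LS (LMax (LVar i1) (LVar i2))) (LMax (LS (LVar i1)) (LS (LVar i2)))"
| sabs: "leq (LMax (LVar i) (LS (LVar i))) (LS (LVar i))"
| zero: "leq (LMax (LVar i) LZ) (LVar i)"
| idem: "leq (LMax (LVar i) (LVar i)) (LVar i)"
| refl: "leq l l"
| sym: "leq l l' \<Longrightarrow> leq l' l"
| trans: "leq l1 l2 \<Longrightarrow> leq l2 l3 \<Longrightarrow> leq l1 l3"
| cong_S: "leq l l' \<Longrightarrow> leq (LS l) (LS l')"
| cong_Max: "leq l1 l1' \<Longrightarrow> leq l2 l2' \<Longrightarrow> leq (LMax l1 l2) (LMax l1' l2')"
| subst: "leq l l' \<Longrightarrow> leq (lsubst \<sigma> l) (lsubst \<sigma> l')"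

end

theory Submission
  imports Defs
begin

primrec ev :: "('v \<Rightarrow> nat) \<Rightarrow> 'v lvl \<Rightarrow> nat" where
  "ev \<rho> (LVar v) = \<rho> v"
| "ev \<rho> LZ = 0"
| "ev \<rho> (LS l) = Suc (ev \<rho> l)"
| "ev \<rho> (LMax a b) = max (ev \<rho> a) (ev \<rho> b)"

lemma ev_subst: "ev \<rho> (lsubst \<sigma> l) = ev (\<lambda>i. ev \<rho> (\<sigma> i)) l"
  by (induction l) auto

lemma ev_spow: "ev \<rho> (spow n l) = n + ev \<rho> l"
  by (induction n) auto

lemma sound: "leq a b \<Longrightarrow> ev \<rho> a = ev \<rho> b"
proof (induction arbitrary: \<rho> rule: leq.induct)
  case (subst l l' \<sigma>)
  then show ?case by (simp add: ev_subst)
qed auto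

lemma three_vars:
  assumes "infinite (UNIV :: 'v set)"
  shows "\<exists>i1 i2 i3 :: 'v. i1 \<noteq> i2 \<and> i1 \<noteq> i3 \<and> i2 \<noteq> i3"
proof -
  obtain i1 :: 'v where True by simp
  obtain i2 where "i2 \<notin> {i1}" using ex_new_if_finite[OF assms, of "{i1}"] by auto
  moreover obtain i3 where "i3 \<notin> {i1, i2}" using ex_new_if_finite[OF assms, of "{i1,i2}"] by auto
  ultimately show ?thesis by blast
qed

definition le :: "'v lvl \<Rightarrow> 'v lvl \<Rightarrow> bool" where
  "le a b = leq (LMax a b) b"

fun atom :: "nat \<times> 'v option \<Rightarrow> 'v lvl" where
  "atom (k, None) = spow k LZ"
| "atom (k, Some v) = spow k (LVar v)"

fun join :: "(nat \<times> 'v option) list \<Rightarrow> 'v lvl" where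
  "join [] = LZ"
| "join [x] = atom x"
| "join (x # y # zs) = LMax (atom x) (join (y # zs))"

lemma join_Cons: "xs \<noteq> [] \<Longrightarrow> join (x # xs) = LMax (atom x) (join xs)"
  by (cases xs) auto

fun sh :: "nat \<times> 'v option \<Rightarrow> nat \<times> 'v option" where
  "sh (k, x) = (Suc k, x)"

lemma atom_sh: "atom (sh x) = LS (atom x)"
  by (cases x; cases "snd x") auto

fun norm :: "'v lvl \<Rightarrow> (nat \<times> 'v option) list" where
  "norm (LVar v) = [(0, Some v)]"
| "norm LZ = [(0, None)]"
| "norm (LS a) = map sh (norm a)"
| "norm (LMax a b) = norm a @ norm b"

lemma norm_ne: "norm a \<noteq> []"
  by (induction a) auto

lemma ev_join_mem: "x \<in> set xs \<Longrightarrow> ev \<rho> (atom x) \<le> ev \<rho> (join xs)"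
  by (induction xs rule: join.induct) auto

lemma ev_join_ex: "xs \<noteq> [] \<Longrightarrow> \<exists>y\<in>set xs. ev \<rho> (join xs) = ev \<rho> (atom y)"
  by (induction xs rule: join.induct) (auto simp: max_def)

lemma ev_atom_None: "ev \<rho> (atom (k, None)) = k" by (simp add: ev_spow)
lemma ev_atom_Some: "ev \<rho> (atom (k, Some v)) = k + \<rho> v" by (simp add: ev_spow)

context
  assumes inf: "infinite (UNIV :: 'v set)"
begin

lemma gen3:
  assumes "\<And>i1 i2 i3 :: 'v. i1 \<noteq> i2 \<Longrightarrow> i1 \<noteq> i3 \<Longrightarrow> i2 \<noteq> i3 \<Longrightarrow> leq (P i1 i2 i3) (Q i1 i2 i3)"
    and "\<And>i1 i2 i3 :: 'v. i1 \<noteq> i2 \<Longrightarrow> i1 \<noteq> i3 \<Longrightarrow> i2 \<noteq> i3 \<Longrightarrow>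
           lsubst (\<lambda>i. if i = i1 then a else if i = i2 then b else c) (P i1 i2 i3) = L \<and>
           lsubst (\<lambda>i. if i = i1 then a else if i = i2 then b else c) (Q i1 i2 i3) = R"
  shows "leq L R"
proof -
  obtain i1 i2 i3 :: 'v where d: "i1 \<noteq> i2" "i1 \<noteq> i3" "i2 \<noteq> i3" using three_vars[OF inf] by blast
  from leq.subst[OF assms(1)[OF d], of "\<lambda>i. if i = i1 then a else if i = i2 then b else c"]
  show ?thesis using assms(2)[OF d] by simp
qed

lemma assoc': "leq (LMax (a::'v lvl) (LMax b c)) (LMax (LMax a b) c)"
  by (rule gen3[where P="\<lambda>i1 i2 i3. LMax (LVar i1) (LMax (LVar i2) (LVar i3))"
      and Q="\<lambda>i1 i2 i3. LMax (LMax (LVar i1) (LVar i2)) (LVar i3)" and a=a and b=b and c=c])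
     (auto intro: leq.assoc)

lemma comm': "leq (LMax (a::'v lvl) b) (LMax b a)"
  by (rule gen3[where P="\<lambda>i1 i2 i3. LMax (LVar i1) (LVar i2)"
      and Q="\<lambda>i1 i2 i3. LMax (LVar i2) (LVar i1)" and a=a and b=b and c=a])
     (auto intro: leq.comm)

lemma sdist': "leq (LS (LMax (a::'v lvl) b)) (LMax (LS a) (LS b))"
  by (rule gen3[where P="\<lambda>i1 i2 i3. LS (LMax (LVar i1) (LVar i2))"
      and Q="\<lambda>i1 i2 i3. LMax (LS (LVar i1)) (LS (LVar i2))" and a=a and b=b and c=a])
     (auto intro: leq.sdist)

lemma sabs': "leq (LMax (a::'v lvl) (LS a)) (LS a)"
  by (rule gen3[where P="\<lambda>i1 i2 i3. LMax (LVar i1) (LS (LVar i1))"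
      and Q="\<lambda>i1 i2 i3. LS (LVar i1)" and a=a and b=a and c=a])
     (auto intro: leq.sabs)

lemma zero': "leq (LMax (a::'v lvl) LZ) a"
  by (rule gen3[where P="\<lambda>i1 i2 i3. LMax (LVar i1) LZ"
      and Q="\<lambda>i1 i2 i3. LVar i1" and a=a and b=a and c=a])
     (auto intro: leq.zero)

lemma idem': "leq (LMax (a::'v lvl) a) a"
  by (rule gen3[where P="\<lambda>i1 i2 i3. LMax (LVar i1) (LVar i1)"
      and Q="\<lambda>i1 i2 i3. LVar i1" and a=a and b=a and c=a])
     (auto intro: leq.idem)

lemmas lq = leq.refl leq.sym leq.trans leq.cong_S leq.cong_Max

lemma le_refl: "le (a::'v lvl) a" unfolding le_def by (rule idem')

lemma le_trans: "le (a::'v lvl) b \<Longrightarrow> le b c \<Longrightarrow> le a c"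
  unfolding le_def
  by (meson assoc' leq.cong_Max leq.refl leq.sym leq.trans)

lemma le_maxI: "le (a::'v lvl) c \<Longrightarrow> le b c \<Longrightarrow> le (LMax a b) c"
  unfolding le_def
  by (meson assoc' leq.cong_Max leq.refl leq.sym leq.trans)

lemma le_max1: "le (a::'v lvl) (LMax a b)"
  unfolding le_def
  by (meson assoc' idem' leq.cong_Max leq.refl leq.sym leq.trans)

lemma le_max2: "le (b::'v lvl) (LMax a b)"
proof -
  have "le b (LMax b a)" by (rule le_max1)
  then show ?thesis unfolding le_def
    by (meson comm' leq.cong_Max leq.refl leq.trans)
qed

lemma le_Z: "le LZ (a::'v lvl)"
  unfolding le_def by (meson comm' zero' leq.trans)

lemma le_S: "le (a::'v lvl) b \<Longrightarrow> le (LS a) (LS b)"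
  unfolding le_def by (meson sdist' leq.cong_S leq.sym leq.trans)

lemma le_spow: "le (a::'v lvl) b \<Longrightarrow> le (spow k a) (spow k b)"
  by (induction k) (auto intro: le_S)

lemma le_suc: "le (a::'v lvl) (LS a)"
  unfolding le_def by (rule sabs')

lemma le_spow_mono: "j \<le> k \<Longrightarrow> le (spow j (a::'v lvl)) (spow k a)"
proof (induction k)
  case 0 then show ?case by (simp add: le_refl)
next
  case (Suc k)
  show ?case
  proof (cases "j = Suc k")
    case True then show ?thesis by (simp add: le_refl)
  next
    case False
    then have "le (spow j a) (spow k a)" using Suc by simp
    then show ?thesis using le_suc le_trans by (metis spow.simps(2))
  qed
qed

lemma le_antisym: "le (a::'v lvl) b \<Longrightarrow> le b a \<Longrightarrow> leq a b"
  unfolding le_def by (meson comm' leq.sym leq.trans)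

lemma le_cong: "leq a a' \<Longrightarrow> leq b b' \<Longrightarrow> le (a::'v lvl) b \<Longrightarrow> le a' b'"
  unfolding le_def by (meson leq.cong_Max leq.sym leq.trans)

lemma join_append: "xs \<noteq> [] \<Longrightarrow> ys \<noteq> [] \<Longrightarrow> leq (join (xs @ ys)) (LMax (join xs) (join (ys :: (nat \<times> 'v option) list)))"
proof (induction xs rule: join.induct)
  case (2 x)
  then show ?case by (simp add: join_Cons leq.refl)
next
  case (3 x y zs)
  have "leq (join (x # y # zs @ ys)) (LMax (atom x) (LMax (join (y # zs)) (join ys)))"
    using 3 by (simp add: join_Cons) (rule leq.cong_Max[OF leq.refl], simp)
  from leq.trans[OF this assoc'] show ?case by simp
qed simp

lemma join_sh: "xs \<noteq> [] \<Longrightarrow> leq (LS (join xs)) (join (map sh (xs :: (nat \<times> 'v option) list)))"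
proof (induction xs rule: join.induct)
  case (2 x)
  then show ?case by (simp add: atom_sh leq.refl)
next
  case (3 x y zs)
  have "leq (LS (join (x # y # zs))) (LMax (LS (atom x)) (LS (join (y # zs))))"
    by (simp add: sdist')
  then show ?case using 3
    by (simp add: atom_sh) (meson leq.cong_Max leq.refl leq.trans)
qed simp

lemma norm_eq: "leq (a::'v lvl) (join (norm a))"
proof (induction a)
  case (LVar x) then show ?case by (simp add: leq.refl)
next
  case LZ then show ?case by (simp add: leq.refl)
next
  case (LS a) then show ?case
    by simp (meson join_sh norm_ne leq.cong_S leq.trans)
next
  case (LMax a b) then show ?case
    by simp (meson join_append norm_ne leq.cong_Max leq.sym leq.trans)
qed

lemma join_le: "(\<forall>x\<in>set xs. le (atom x) B) \<Longrightarrow> le (join (xs :: (nat \<times> 'v option) list)) B"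
  by (induction xs rule: join.induct) (auto intro: le_maxI le_Z)

lemma le_join_mem: "y \<in> set ys \<Longrightarrow> le (atom y) (join (ys :: (nat \<times> 'v option) list))"
proof (induction ys rule: join.induct)
  case (2 x) then show ?case by (simp add: le_refl)
next
  case (3 x y zs) then show ?case
    by (auto intro: le_max1 le_trans[OF _ le_max2])
qed simp

lemma atom_le:
  assumes ne: "ys \<noteq> []" and sem: "\<forall>\<rho>. ev \<rho> (atom x) \<le> ev \<rho> (join (ys :: (nat \<times> 'v option) list))"
  shows "\<exists>y\<in>set ys. le (atom x) (atom y)"
proof (cases x)
  case (Pair k o')
  show ?thesis
  proof (cases o')
    case None
    obtain y where y: "y \<in> set ys" "ev (\<lambda>_. 0) (join ys) = ev (\<lambda>_. 0) (atom y)"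
      using ev_join_ex[OF ne] by blast
    obtain j w where yj: "y = (j, w)" by (cases y)
    have "k \<le> j" using sem[rule_format, of "\<lambda>_. 0"] y yj Pair None
      by (cases w) (auto simp: ev_spow)
    have "le (atom x) (spow j LZ)" using Pair None le_spow_mono[OF \<open>k \<le> j\<close>] by simp
    moreover have "le (spow j LZ) (atom y)" using yj
      by (cases w) (auto intro: le_spow le_Z le_refl)
    ultimately show ?thesis using y le_trans by blast
  next
    case (Some v)
    define N where "N = k + sum_list (map fst ys) + 1"
    define \<rho> where "\<rho> = (\<lambda>w. if w = v then N else (0::nat))"
    obtain y where y: "y \<in> set ys" "ev \<rho> (join ys) = ev \<rho> (atom y)"
      using ev_join_ex[OF ne] by blast
    obtain j w where yj: "y = (j, w)" by (cases y)
    have "fst y \<in> set (map fst ys)" using y(1) by simp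
    then have jle: "j \<le> sum_list (map fst ys)"
      using yj member_le_sum_list by fastforce
    have "ev \<rho> (atom x) = k + N" using Pair Some by (simp add: ev_spow \<rho>_def)
    then have ge: "k + N \<le> ev \<rho> (atom y)" using sem y(2) by metis
    have "w = Some v \<and> k \<le> j"
    proof (cases w)
      case None
      then have "ev \<rho> (atom y) = j" using yj by (simp add: ev_spow)
      then show ?thesis using ge jle N_def by linarith
    next
      case (Some w')
      then have e: "ev \<rho> (atom y) = j + \<rho> w'" using yj by (simp add: ev_spow)
      show ?thesis
      proof (cases "w' = v")
        case True
        then show ?thesis using e ge Some \<rho>_def by simp
      next
        case False
        then have "ev \<rho> (atom y) = j" using e \<rho>_def by simp
        then show ?thesis using ge jle N_def by linarith
      qed
    qed
    then have "le (atom x) (atom y)" using yj Pair Some le_spow_mono by simp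
    then show ?thesis using y(1) by blast
  qed
qed

lemma complete_le: "(\<forall>\<rho>. ev \<rho> a \<le> ev \<rho> b) \<Longrightarrow> le (a::'v lvl) b"
proof -
  assume sem: "\<forall>\<rho>. ev \<rho> a \<le> ev \<rho> b"
  have "le (join (norm a)) (join (norm b))"
  proof (rule join_le, rule ballI)
    fix x assume x: "x \<in> set (norm a)"
    have "\<forall>\<rho>. ev \<rho> (atom x) \<le> ev \<rho> (join (norm b))"
    proof
      fix \<rho>
      have "ev \<rho> (atom x) \<le> ev \<rho> (join (norm a))" by (rule ev_join_mem[OF x])
      also have "\<dots> = ev \<rho> a" using sound[OF norm_eq[of a]] by simp
      also have "\<dots> \<le> ev \<rho> b" using sem by simp
      also have "\<dots> = ev \<rho> (join (norm b))" using sound[OF norm_eq[of b]] by simp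
      finally show "ev \<rho> (atom x) \<le> ev \<rho> (join (norm b))" .
    qed
    then obtain y where "y \<in> set (norm b)" "le (atom x) (atom y)"
      using atom_le norm_ne by blast
    then show "le (atom x) (join (norm b))" using le_join_mem le_trans by blast
  qed
  then show ?thesis using le_cong norm_eq leq.sym by blast
qed

lemma complete: "(\<forall>\<rho>. ev \<rho> a = ev \<rho> b) \<Longrightarrow> leq (a::'v lvl) b"
  by (rule le_antisym; rule complete_le) auto

end

theorem mainTheorem7:
  fixes l1 l2 l :: "'v lvl" and n :: nat
  assumes "infinite (UNIV :: 'v set)" and "n > 0"
  shows "leq (LMax l1 l) (LMax l2 (spow n l)) \<longleftrightarrow> leq l1 (LMax l2 (spow n l))"
proof
  assume h: "leq (LMax l1 l) (LMax l2 (spow n l))"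
  show "leq l1 (LMax l2 (spow n l))"
  proof (rule complete[OF assms(1)], rule allI)
    fix \<rho>
    have "max (ev \<rho> l1) (ev \<rho> l) = max (ev \<rho> l2) (n + ev \<rho> l)"
      using sound[OF h, of \<rho>] by (simp add: ev_spow)
    then show "ev \<rho> l1 = ev \<rho> (LMax l2 (spow n l))" using assms(2)
      by (simp add: ev_spow max_def split: if_splits)
  qed
next
  assume h: "leq l1 (LMax l2 (spow n l))"
  show "leq (LMax l1 l) (LMax l2 (spow n l))"
  proof (rule complete[OF assms(1)], rule allI)
    fix \<rho>
    show "ev \<rho> (LMax l1 l) = ev \<rho> (LMax l2 (spow n l))"
      using sound[OF h, of \<rho>] assms(2) by (simp add: ev_spow max_def)
  qed
qed

end
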